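(* Let $\mathcal{H}$ be a family of digraphs, $D$ a digraph and $X$ an $\mathcal{H}$-deletion set of $D$. Let $F\subseteq D$ be isomorphic to some graph in $\mathcal{H}$, and suppose that for each $(x,y)\in V(F)\times V(F)$ there is a directed path $P_{xy}$ from $x$ to $y$ in $D$. Then there exists a vertex $a\in X$ such that for every $v\in V(F)$ there is a directed path from $v$ to $a$ and a directed path from $a$ to $v$, both contained in $\bigcup_{(x,y)\in V(F)\times V(F)}P_{xy}$.
   Context: Subgraphs are not necessarily induced; strong components are maximal sets of mutually reachable vertices. $X\subseteq V(D)$ is an $\mathcal{H}$-deletion set of $D$ if no strong component of $D-X$ contains a subgraph isomorphic to a graph in $\mathcal{H}$. *)

theory Defs
  imports Main
begin

type_synonym 'a digraph = "'a set \<times> ('a \<times> 'a) set"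

definition verts :: "'a digraph \<Rightarrow> 'a set" where "verts G = fst G"
definition arcs :: "'a digraph \<Rightarrow> ('a \<times> 'a) set" where "arcs G = snd G"

definition digraph :: "'a digraph \<Rightarrow> bool" where
  "digraph G \<longleftrightarrow> verts G \<noteq> {} \<and> finite (verts G) \<and> arcs G \<subseteq> verts G \<times> verts G
     \<and> (\<forall>v. (v, v) \<notin> arcs G)"

definition subgraph :: "'a digraph \<Rightarrow> 'a digraph \<Rightarrow> bool" where
  "subgraph F G \<longleftrightarrow> digraph F \<and> verts F \<subseteq> verts G \<and> arcs F \<subseteq> arcs G"

definition isomorphic :: "'a digraph \<Rightarrow> 'b digraph \<Rightarrow> bool" where
  "isomorphic F H \<longleftrightarrow> (\<exists>f. bij_betw f (verts F) (verts H) \<and>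
     (\<forall>u\<in>verts F. \<forall>v\<in>verts F. (u, v) \<in> arcs F \<longleftrightarrow> (f u, f v) \<in> arcs H))"

definition contains_member :: "'a digraph \<Rightarrow> 'b digraph set \<Rightarrow> bool" where
  "contains_member G \<H> \<longleftrightarrow> (\<exists>F H. subgraph F G \<and> H \<in> \<H> \<and> isomorphic F H)"

definition induced :: "'a digraph \<Rightarrow> 'a set \<Rightarrow> 'a digraph" where
  "induced G S = (verts G \<inter> S, arcs G \<inter> (S \<times> S))"

definition delete_verts :: "'a digraph \<Rightarrow> 'a set \<Rightarrow> 'a digraph" where
  "delete_verts G X = induced G (verts G - X)"

definition reach :: "'a digraph \<Rightarrow> 'a \<Rightarrow> 'a \<Rightarrow> bool" where
  "reach G x y \<longleftrightarrow> (x, y) \<in> (arcs G)\<^sup>*"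

definition strong_component :: "'a digraph \<Rightarrow> 'a set \<Rightarrow> bool" where
  "strong_component G C \<longleftrightarrow> C \<noteq> {} \<and> C \<subseteq> verts G \<and>
     (\<forall>x\<in>C. \<forall>y\<in>C. reach G x y \<and> reach G y x) \<and>
     (\<forall>x\<in>C. \<forall>v\<in>verts G. reach G x v \<and> reach G v x \<longrightarrow> v \<in> C)"

definition deletion_set :: "'b digraph set \<Rightarrow> 'a digraph \<Rightarrow> 'a set \<Rightarrow> bool" where
  "deletion_set \<H> D X \<longleftrightarrow> X \<subseteq> verts D \<and>
     (\<forall>C. strong_component (delete_verts D X) C \<longrightarrow>
        \<not> contains_member (induced (delete_verts D X) C) \<H>)"

definition path_arcs :: "'a list \<Rightarrow> ('a \<times> 'a) set" where
  "path_arcs xs = set (zip xs (tl xs))"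

definition path_graph :: "'a list \<Rightarrow> 'a digraph" where
  "path_graph xs = (set xs, path_arcs xs)"

definition dpath :: "'a digraph \<Rightarrow> 'a list \<Rightarrow> 'a \<Rightarrow> 'a \<Rightarrow> bool" where
  "dpath G xs x y \<longleftrightarrow> xs \<noteq> [] \<and> distinct xs \<and> hd xs = x \<and> last xs = y \<and>
     set xs \<subseteq> verts G \<and> path_arcs xs \<subseteq> arcs G"

definition graph_Union :: "'a digraph set \<Rightarrow> 'a digraph" where
  "graph_Union S = (\<Union>G\<in>S. verts G, \<Union>G\<in>S. arcs G)"

end

theory Submission
  imports Defs
begin

lemma pa_nil[simp]: "path_arcs [] = {}" by (simp add: path_arcs_def)
lemma pa_one[simp]: "path_arcs [x] = {}" by (simp add: path_arcs_def)
lemma pa_cons2[simp]: "path_arcs (x # y # zs) = insert (x, y) (path_arcs (y # zs))"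
  by (simp add: path_arcs_def)

lemma pa_snoc: "xs \<noteq> [] \<Longrightarrow> path_arcs (xs @ [z]) = insert (last xs, z) (path_arcs xs)"
proof (induction xs)
  case Nil then show ?case by simp
next
  case (Cons a ys)
  then show ?case by (cases ys) auto
qed

lemma pa_append: "path_arcs xs \<subseteq> path_arcs (xs @ ys)"
proof (induction xs)
  case Nil then show ?case by simp
next
  case (Cons a zs)
  then show ?case by (cases zs; cases ys) auto
qed

lemma pa_sub: "path_arcs xs \<subseteq> set xs \<times> set xs"
proof (induction xs)
  case Nil then show ?case by simp
next
  case (Cons a zs)
  then show ?case by (cases zs) auto
qed

lemma pa_reach: "xs \<noteq> [] \<Longrightarrow> v \<in> set xs \<Longrightarrow>
   (hd xs, v) \<in> (path_arcs xs)\<^sup>* \<and> (v, last xs) \<in> (path_arcs xs)\<^sup>*"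
proof (induction xs arbitrary: v)
  case Nil then show ?case by simp
next
  case (Cons a ys)
  show ?case
  proof (cases ys)
    case Nil then show ?thesis using Cons by simp
  next
    case (Cons b zs)
    have m: "(path_arcs ys)\<^sup>* \<subseteq> (path_arcs (a # ys))\<^sup>*"
      using Cons by (intro rtrancl_mono) auto
    have e: "(a, hd ys) \<in> (path_arcs (a # ys))\<^sup>*" using Cons by auto
    show ?thesis
    proof (cases "v = a")
      case True
      have "(hd ys, last ys) \<in> (path_arcs ys)\<^sup>*" using Cons.IH[of "hd ys"] Cons by simp
      then have "(hd ys, last ys) \<in> (path_arcs (a # ys))\<^sup>*" using m by blast
      then have "(a, last (a # ys)) \<in> (path_arcs (a # ys))\<^sup>*" using e Cons
        by (metis last_ConsR list.distinct(1) rtrancl_trans)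
      then show ?thesis using True by simp
    next
      case False
      then have "v \<in> set ys" using Cons.prems by simp
      then have "(hd ys, v) \<in> (path_arcs ys)\<^sup>* \<and> (v, last ys) \<in> (path_arcs ys)\<^sup>*"
        using Cons.IH Cons by simp
      then show ?thesis using m e Cons
        by (metis (no_types, lifting) last_ConsR list.distinct(1) list.sel(1) rtrancl_trans subsetD)
    qed
  qed
qed

lemma reach_dpath:
  assumes "arcs G \<subseteq> verts G \<times> verts G" "x \<in> verts G" "(x, y) \<in> (arcs G)\<^sup>*"
  shows "\<exists>Q. dpath G Q x y"
  using assms(3)
proof (induction rule: rtrancl_induct)
  case base
  have "dpath G [x] x x" using assms(2) by (simp add: dpath_def)
  then show ?case by blast
next
  case (step y z)
  then obtain Q where Q: "dpath G Q x y" by blast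
  have zv: "z \<in> verts G" using step assms(1) by auto
  show ?case
  proof (cases "z \<in> set Q")
    case True
    then obtain as bs where Qs: "Q = as @ z # bs" by (meson split_list)
    have "path_arcs (as @ [z]) \<subseteq> path_arcs Q"
      using pa_append[of "as @ [z]" bs] Qs by simp
    moreover have "hd (as @ [z]) = x"
      using Q Qs by (cases as) (auto simp: dpath_def)
    ultimately have "dpath G (as @ [z]) x z" using Q Qs by (auto simp: dpath_def)
    then show ?thesis by blast
  next
    case False
    have "dpath G (Q @ [z]) x z" using Q False zv step(2) pa_snoc[of Q z]
      by (auto simp: dpath_def)
    then show ?thesis by blast
  qed
qed

theorem lemma10:
  fixes \<H> :: "'b digraph set" and D F :: "'a digraph" and X :: "'a set"
    and P :: "'a \<Rightarrow> 'a \<Rightarrow> 'a list"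
  assumes "digraph D"
    and "deletion_set \<H> D X"
    and "subgraph F D"
    and "\<exists>H\<in>\<H>. isomorphic F H"
    and "\<forall>x\<in>verts F. \<forall>y\<in>verts F. dpath D (P x y) x y"
  shows "\<exists>a\<in>X. \<forall>v\<in>verts F.
           (\<exists>Q. dpath (graph_Union {path_graph (P x y) | x y. x \<in> verts F \<and> y \<in> verts F}) Q v a)
         \<and> (\<exists>Q. dpath (graph_Union {path_graph (P x y) | x y. x \<in> verts F \<and> y \<in> verts F}) Q a v)"
proof -
  define VF where "VF = verts F"
  define U where "U = graph_Union {path_graph (P x y) | x y. x \<in> verts F \<and> y \<in> verts F}"
  have vU: "verts U = (\<Union>x\<in>VF. \<Union>y\<in>VF. set (P x y))"
    unfolding U_def VF_def graph_Union_def verts_def path_graph_def by (auto; blast)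
  have aU: "arcs U = (\<Union>x\<in>VF. \<Union>y\<in>VF. path_arcs (P x y))"
    unfolding U_def VF_def graph_Union_def arcs_def path_graph_def by (auto; blast)
  have dp: "\<And>x y. x \<in> VF \<Longrightarrow> y \<in> VF \<Longrightarrow> dpath D (P x y) x y"
    using assms(5) VF_def by auto
  have aUv: "arcs U \<subseteq> verts U \<times> verts U"
    unfolding aU vU using pa_sub by blast
  have inP: "\<And>x y u. x \<in> VF \<Longrightarrow> y \<in> VF \<Longrightarrow> u \<in> set (P x y) \<Longrightarrow>
      (x, u) \<in> (arcs U)\<^sup>* \<and> (u, y) \<in> (arcs U)\<^sup>*"
  proof -
    fix x y u assume h: "x \<in> VF" "y \<in> VF" "u \<in> set (P x y)"
    have m: "(path_arcs (P x y))\<^sup>* \<subseteq> (arcs U)\<^sup>*"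
      using h unfolding aU by (intro rtrancl_mono) blast
    have "(hd (P x y), u) \<in> (path_arcs (P x y))\<^sup>* \<and> (u, last (P x y)) \<in> (path_arcs (P x y))\<^sup>*"
      using pa_reach[of "P x y" u] h dp[of x y] by (auto simp: dpath_def)
    then show "(x, u) \<in> (arcs U)\<^sup>* \<and> (u, y) \<in> (arcs U)\<^sup>*"
      using m dp[OF h(1,2)] by (auto simp: dpath_def)
  qed
  have R: "\<And>u w. u \<in> verts U \<Longrightarrow> w \<in> verts U \<Longrightarrow> (u, w) \<in> (arcs U)\<^sup>*"
  proof -
    fix u w assume "u \<in> verts U" "w \<in> verts U"
    then obtain x1 y1 x2 y2 where h: "x1 \<in> VF" "y1 \<in> VF" "u \<in> set (P x1 y1)"
      "x2 \<in> VF" "y2 \<in> VF" "w \<in> set (P x2 y2)" unfolding vU by blast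
    have "hd (P y1 x2) \<in> set (P y1 x2)" using dp[of y1 x2] h unfolding dpath_def by (metis hd_in_set)
    then have "(y1, hd (P y1 x2)) \<in> (arcs U)\<^sup>* \<and> (hd (P y1 x2), x2) \<in> (arcs U)\<^sup>*"
      using inP[of y1 x2 "hd (P y1 x2)"] h by blast
    then have "(y1, x2) \<in> (arcs U)\<^sup>*"
      by (meson rtrancl_trans)
    then show "(u, w) \<in> (arcs U)\<^sup>*" using inP h by (meson rtrancl_trans)
  qed
  have VFU: "VF \<subseteq> verts U"
  proof
    fix v assume v: "v \<in> VF"
    have "v \<in> set (P v v)" using dp[OF v v] unfolding dpath_def by (metis hd_in_set)
    then show "v \<in> verts U" using v unfolding vU by blast
  qed
  have dF: "digraph F" using assms(3) by (simp add: subgraph_def)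
  then obtain f0 where f0: "f0 \<in> VF" unfolding VF_def digraph_def by blast
  have UD: "verts U \<subseteq> verts D" unfolding vU using dp unfolding dpath_def by blast
  have aUD: "arcs U \<subseteq> arcs D" unfolding aU using dp unfolding dpath_def by blast
  have "verts U \<inter> X \<noteq> {}"
  proof
    assume dis: "verts U \<inter> X = {}"
    define D' where "D' = delete_verts D X"
    have vD': "verts D' = verts D - X" unfolding D'_def delete_verts_def induced_def verts_def by auto
    have aD': "arcs D' = arcs D \<inter> ((verts D - X) \<times> (verts D - X))"
      unfolding D'_def delete_verts_def induced_def arcs_def verts_def by auto
    have UD': "verts U \<subseteq> verts D'" using UD dis vD' by auto
    have aUD': "arcs U \<subseteq> arcs D'" using aUD aUv UD' vD' aD' by auto
    define C where "C = {v \<in> verts D'. reach D' f0 v \<and> reach D' v f0}"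
    have VFC: "VF \<subseteq> C"
    proof
      fix v assume v: "v \<in> VF"
      have "(f0, v) \<in> (arcs U)\<^sup>*" "(v, f0) \<in> (arcs U)\<^sup>*" using R[of f0 v] R[of v f0] VFU f0 v by blast+
      then have "(f0, v) \<in> (arcs D')\<^sup>*" "(v, f0) \<in> (arcs D')\<^sup>*"
        using rtrancl_mono[OF aUD'] by auto
      then show "v \<in> C" using v VFU UD' unfolding C_def reach_def by auto
    qed
    have sc: "strong_component D' C"
      unfolding strong_component_def
    proof (intro conjI)
      show "C \<noteq> {}" using VFC f0 by auto
      show "C \<subseteq> verts D'" unfolding C_def by auto
      show "\<forall>x\<in>C. \<forall>y\<in>C. reach D' x y \<and> reach D' y x"
      proof (intro ballI)
        fix x y assume "x \<in> C" "y \<in> C"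
        then have "(x, f0) \<in> (arcs D')\<^sup>*" "(f0, x) \<in> (arcs D')\<^sup>*"
          "(y, f0) \<in> (arcs D')\<^sup>*" "(f0, y) \<in> (arcs D')\<^sup>*"
          unfolding C_def reach_def by simp_all
        then show "reach D' x y \<and> reach D' y x" unfolding reach_def
          using rtrancl_trans by metis
      qed
      show "\<forall>x\<in>C. \<forall>v\<in>verts D'. reach D' x v \<and> reach D' v x \<longrightarrow> v \<in> C"
      proof (intro ballI impI)
        fix x v assume "x \<in> C" "v \<in> verts D'" "reach D' x v \<and> reach D' v x"
        then have "(x, f0) \<in> (arcs D')\<^sup>*" "(f0, x) \<in> (arcs D')\<^sup>*"
          "(x, v) \<in> (arcs D')\<^sup>*" "(v, x) \<in> (arcs D')\<^sup>*"
          unfolding C_def reach_def by simp_all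
        then have "(f0, v) \<in> (arcs D')\<^sup>*" "(v, f0) \<in> (arcs D')\<^sup>*"
          using rtrancl_trans by metis+
        then show "v \<in> C" using \<open>v \<in> verts D'\<close> unfolding C_def reach_def by simp
      qed
    qed
    have "subgraph F (induced D' C)"
    proof -
      have aFF: "arcs F \<subseteq> verts F \<times> verts F" using dF by (simp add: digraph_def)
      have aFD: "arcs F \<subseteq> arcs D" using assms(3) by (simp add: subgraph_def)
      have Cs: "C \<subseteq> verts D'" unfolding C_def by auto
      have FC: "verts F \<subseteq> C" using VFC VF_def by simp
      have FD': "verts F \<subseteq> verts D - X" using FC Cs vD' by simp
      have aFD': "arcs F \<subseteq> arcs D'"
      proof (rule subsetI)
        fix e assume e: "e \<in> arcs F"
        obtain u w where uw: "e = (u, w)" by (cases e)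
        have "u \<in> verts F" "w \<in> verts F" using aFF e uw by auto
        then have "u \<in> verts D - X" "w \<in> verts D - X" using FD' by auto
        moreover have "e \<in> arcs D" using aFD e by auto
        ultimately show "e \<in> arcs D'" unfolding aD' uw by simp
      qed
      have "verts (induced D' C) = verts D' \<inter> C" "arcs (induced D' C) = arcs D' \<inter> (C \<times> C)"
        unfolding induced_def verts_def arcs_def by simp_all
      then have "verts F \<subseteq> verts (induced D' C)" "arcs F \<subseteq> arcs (induced D' C)"
        using FC Cs aFD' aFF by auto
      then show ?thesis using dF unfolding subgraph_def by blast
    qed
    moreover obtain H where "H \<in> \<H>" "isomorphic F H" using assms(4) by blast
    ultimately have "contains_member (induced D' C) \<H>"
      unfolding contains_member_def by blast
    moreover have "\<not> contains_member (induced D' C) \<H>"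
      using assms(2) sc unfolding deletion_set_def D'_def by simp
    ultimately show False by simp
  qed
  then obtain a where a: "a \<in> verts U" "a \<in> X" by blast
  have "\<forall>v\<in>verts F. (\<exists>Q. dpath U Q v a) \<and> (\<exists>Q. dpath U Q a v)"
  proof
    fix v assume "v \<in> verts F"
    then have v: "v \<in> verts U" using VFU VF_def by auto
    show "(\<exists>Q. dpath U Q v a) \<and> (\<exists>Q. dpath U Q a v)"
      using reach_dpath[OF aUv v R[OF v a(1)]] reach_dpath[OF aUv a(1) R[OF a(1) v]] by blast
  qed
  then have "\<forall>v\<in>verts F.
           (\<exists>Q. dpath (graph_Union {path_graph (P x y) | x y. x \<in> verts F \<and> y \<in> verts F}) Q v a)
         \<and> (\<exists>Q. dpath (graph_Union {path_graph (P x y) | x y. x \<in> verts F \<and> y \<in> verts F}) Q a v)"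
    by (simp only: U_def)
  then show ?thesis using a(2) by blast
qed

end
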